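(* Consider the Feel-Good Thompson Sampling algorithm described in the context, run with learning rate $\eta\in(0,1]$, in the adversarial setting described there. Then $$\mathrm{Reg}_{\mathsf{MNL}}\le 12\eta NK(K+1)^4T+4\eta T+\frac{Z_T}{\eta},\qquad Z_T=-\mathbb{E}\Big[\log\mathbb{E}_{f\sim p_1}\Big[\exp\Big(-\eta\sum_{t=1}^T(\hat\ell_{t,f}-\hat\ell_{t,f^\star})\Big)\Big]\Big].$$
   Context: $N\ge K\ge1$, $\mathcal{S}$ = subsets $S\subseteq[N]$ with $1\le|S|\le K$. For $S\in\mathcal{S}$, $v\in[0,1]^N$: $\mu(S,v)$ is the distribution on $\{0,\dots,N\}$ with $\mu_i(S,v)=\frac{v_i}{1+\sum_{j\in S}v_j}$ ($i\in S$), $\mu_0(S,v)=\frac{1}{1+\sum_{j\in S}v_j}$, $0$ otherwise; $R(S,v,r)=\frac{\sum_{i\in S}r_iv_i}{1+\sum_{i\in S}v_i}$. Adversarial setting: $\mathcal{F}$ is a class of functions $\mathcal{X}\to[0,1]^N$ containing an unknown $f^\star$; at each round $t=1,\dots,T$ a context $x_t\in\mathcal{X}$ and reward vector $r_t\in[0,1]^N$ are chosen arbitrarily by an adversary (possibly depending on the past history but not on the learner's current internal randomness); the learner picks $S_t\in\mathcal{S}$ and observes $i_t\sim\mu(S_t,f^\star(x_t))$. Regret: $\mathrm{Reg}_{\mathsf{MNL}}=\mathbb{E}[\sum_{t=1}^T\max_{S}R(S,f^\star(x_t),r_t)-R(S_t,f^\star(x_t),r_t)]$. Feel-Good Thompson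 Sampling: $p_1$ is the uniform distribution over $\mathcal{F}$. At round $t$: sample $f_t\sim p_t$; receive $(x_t,r_t)$; choose $S_t\in\arg\max_{S\in\mathcal{S}}R(S,f_t(x_t),r_t)$; observe $i_t$; for each $f\in\mathcal{F}$ define $$\hat\ell_{t,f}=\frac{1}{8\eta K}\sum_{i\in S_t}\big(\mu_i(S_t,f(x_t))-\mathbb{1}[i=i_t]\big)^2-\max_{S\in\mathcal{S}}R(S,f(x_t),r_t);$$ and update $p_{t+1}(f)\propto p_t(f)\exp(-\eta\hat\ell_{t,f})$. *)

theory Defs
  imports "HOL-Probability.Probability"
begin

text \<open>Items are [N] = {1..N}; the outcome 0 is the no-purchase option.
  Preference vectors v in [0,1]^N are modelled as functions nat => real.\<close>

definition assortments :: "nat \<Rightarrow> nat \<Rightarrow> nat set set" where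
  "assortments N K = {S. S \<subseteq> {1..N} \<and> 1 \<le> card S \<and> card S \<le> K}"

definition mnl_prob :: "nat set \<Rightarrow> (nat \<Rightarrow> real) \<Rightarrow> nat \<Rightarrow> real" where
  "mnl_prob S v i =
     (if i \<in> S then v i / (1 + (\<Sum>j\<in>S. v j))
      else if i = 0 then 1 / (1 + (\<Sum>j\<in>S. v j)) else 0)"

definition mnl_pmf :: "nat set \<Rightarrow> (nat \<Rightarrow> real) \<Rightarrow> nat pmf" where
  "mnl_pmf S v = embed_pmf (mnl_prob S v)"

definition mnl_rev :: "nat set \<Rightarrow> (nat \<Rightarrow> real) \<Rightarrow> (nat \<Rightarrow> real) \<Rightarrow> real" where
  "mnl_rev S v r = (\<Sum>i\<in>S. r i * v i) / (1 + (\<Sum>i\<in>S. v i))"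

definition max_rev :: "nat \<Rightarrow> nat \<Rightarrow> (nat \<Rightarrow> real) \<Rightarrow> (nat \<Rightarrow> real) \<Rightarrow> real" where
  "max_rev N K v r = Max ((\<lambda>S. mnl_rev S v r) ` assortments N K)"

text \<open>One round of history: (sampled f_t, x_t, r_t, S_t, i_t).\<close>
type_synonym 'x round = "('x \<Rightarrow> nat \<Rightarrow> real) \<times> 'x \<times> (nat \<Rightarrow> real) \<times> nat set \<times> nat"

definition loss_est :: "nat \<Rightarrow> nat \<Rightarrow> real \<Rightarrow> ('x \<Rightarrow> nat \<Rightarrow> real) \<Rightarrow> 'x round \<Rightarrow> real" where
  "loss_est N K \<eta> f rd =
     (case rd of (g, x, r, S, i) \<Rightarrow>
        1 / (8 * \<eta> * real K) * (\<Sum>j\<in>S. (mnl_prob S (f x) j - (if j = i then 1 else 0))\<^sup>2)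
        - max_rev N K (f x) r)"

definition cum_loss :: "nat \<Rightarrow> nat \<Rightarrow> real \<Rightarrow> ('x \<Rightarrow> nat \<Rightarrow> real) \<Rightarrow> 'x round list \<Rightarrow> real" where
  "cum_loss N K \<eta> f h = (\<Sum>rd\<leftarrow>h. loss_est N K \<eta> f rd)"

definition posterior :: "('x \<Rightarrow> nat \<Rightarrow> real) set \<Rightarrow> nat \<Rightarrow> nat \<Rightarrow> real
    \<Rightarrow> 'x round list \<Rightarrow> ('x \<Rightarrow> nat \<Rightarrow> real) pmf" where
  "posterior F N K \<eta> h =
     embed_pmf (\<lambda>f. if f \<in> F then
        exp (- \<eta> * cum_loss N K \<eta> f h) / (\<Sum>g\<in>F. exp (- \<eta> * cum_loss N K \<eta> g h))
      else 0)"

text \<open>One round of FGTS against the adaptive adversary \<open>adv\<close> (which maps the past history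
  to the current context and reward vector), with argmax selection rule \<open>sel\<close>.\<close>
definition fgts_step :: "('x \<Rightarrow> nat \<Rightarrow> real) set \<Rightarrow> nat \<Rightarrow> nat \<Rightarrow> real
    \<Rightarrow> ('x \<Rightarrow> nat \<Rightarrow> real) \<Rightarrow> ('x round list \<Rightarrow> 'x \<times> (nat \<Rightarrow> real))
    \<Rightarrow> ((nat \<Rightarrow> real) \<Rightarrow> (nat \<Rightarrow> real) \<Rightarrow> nat set)
    \<Rightarrow> 'x round list \<Rightarrow> 'x round list pmf" where
  "fgts_step F N K \<eta> fstar adv sel h =
     bind_pmf (posterior F N K \<eta> h) (\<lambda>f.
       (let x = fst (adv h); r = snd (adv h); S = sel (f x) r in
        map_pmf (\<lambda>i. h @ [(f, x, r, S, i)]) (mnl_pmf S (fstar x))))"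

fun fgts_traj :: "('x \<Rightarrow> nat \<Rightarrow> real) set \<Rightarrow> nat \<Rightarrow> nat \<Rightarrow> real
    \<Rightarrow> ('x \<Rightarrow> nat \<Rightarrow> real) \<Rightarrow> ('x round list \<Rightarrow> 'x \<times> (nat \<Rightarrow> real))
    \<Rightarrow> ((nat \<Rightarrow> real) \<Rightarrow> (nat \<Rightarrow> real) \<Rightarrow> nat set)
    \<Rightarrow> nat \<Rightarrow> 'x round list pmf" where
  "fgts_traj F N K \<eta> fstar adv sel 0 = return_pmf []"
| "fgts_traj F N K \<eta> fstar adv sel (Suc t) =
     bind_pmf (fgts_traj F N K \<eta> fstar adv sel t) (fgts_step F N K \<eta> fstar adv sel)"

definition round_regret :: "nat \<Rightarrow> nat \<Rightarrow> ('x \<Rightarrow> nat \<Rightarrow> real) \<Rightarrow> 'x round \<Rightarrow> real" where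
  "round_regret N K fstar rd =
     (case rd of (g, x, r, S, i) \<Rightarrow> max_rev N K (fstar x) r - mnl_rev S (fstar x) r)"

definition regret_MNL :: "('x \<Rightarrow> nat \<Rightarrow> real) set \<Rightarrow> nat \<Rightarrow> nat \<Rightarrow> real
    \<Rightarrow> ('x \<Rightarrow> nat \<Rightarrow> real) \<Rightarrow> ('x round list \<Rightarrow> 'x \<times> (nat \<Rightarrow> real))
    \<Rightarrow> ((nat \<Rightarrow> real) \<Rightarrow> (nat \<Rightarrow> real) \<Rightarrow> nat set) \<Rightarrow> nat \<Rightarrow> real" where
  "regret_MNL F N K \<eta> fstar adv sel T =
     measure_pmf.expectation (fgts_traj F N K \<eta> fstar adv sel T)
       (\<lambda>h. \<Sum>rd\<leftarrow>h. round_regret N K fstar rd)"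

definition Z_term :: "('x \<Rightarrow> nat \<Rightarrow> real) set \<Rightarrow> nat \<Rightarrow> nat \<Rightarrow> real
    \<Rightarrow> ('x \<Rightarrow> nat \<Rightarrow> real) \<Rightarrow> ('x round list \<Rightarrow> 'x \<times> (nat \<Rightarrow> real))
    \<Rightarrow> ((nat \<Rightarrow> real) \<Rightarrow> (nat \<Rightarrow> real) \<Rightarrow> nat set) \<Rightarrow> nat \<Rightarrow> real" where
  "Z_term F N K \<eta> fstar adv sel T =
     - measure_pmf.expectation (fgts_traj F N K \<eta> fstar adv sel T)
       (\<lambda>h. ln (measure_pmf.expectation (pmf_of_set F)
          (\<lambda>f. exp (- \<eta> * (\<Sum>rd\<leftarrow>h. loss_est N K \<eta> f rd - loss_est N K \<eta> fstar rd)))))"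

end

theory Submission
  imports Defs
begin


lemma exp_quad1:
  fixes x :: real assumes "\<bar>x\<bar> \<le> 1" shows "exp x \<le> 1 + x + x\<^sup>2"
proof (cases "0 \<le> x")
  case True then show ?thesis using exp_bound assms by auto
next
  case False
  define t where "t = -x"
  have t: "0 \<le> t" "t \<le> 1" using False assms t_def by auto
  have "1 + t + t\<^sup>2/2 \<le> exp t" by (rule exp_lower_Taylor_quadratic[OF t(1)])
  have pos: "0 < 1 + t + t\<^sup>2/2" using t by (simp add: add_pos_nonneg)
  have "exp x = 1 / exp t" by (simp add: t_def exp_minus field_simps)
  also have "\<dots> \<le> 1 / (1 + t + t\<^sup>2/2)"
    using \<open>1 + t + t\<^sup>2/2 \<le> exp t\<close> pos by (simp add: frac_le)
  also have "\<dots> \<le> 1 - t + t\<^sup>2/2"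
  proof -
    have "1 \<le> (1 - t + t\<^sup>2/2) * (1 + t + t\<^sup>2/2)"
      by (simp add: power2_eq_square algebra_simps) (smt (verit) mult_nonneg_nonneg t(1))
    then show ?thesis using pos by (simp add: divide_le_eq)
  qed
  also have "\<dots> \<le> 1 + x + x\<^sup>2" using t_def by (simp add: power2_eq_square)
  finally show ?thesis .
qed

lemma exp_quad2:
  fixes y :: real assumes "\<bar>y\<bar> \<le> 2" shows "exp y \<le> 1 + y + 3/2 * y\<^sup>2"
proof -
  have h: "exp (y/2) \<le> 1 + y/2 + (y/2)\<^sup>2" using exp_quad1[of "y/2"] assms by auto
  have "exp y = (exp (y/2))\<^sup>2" by (simp add: power2_eq_square exp_add[symmetric])
  also have "\<dots> \<le> (1 + y/2 + (y/2)\<^sup>2)\<^sup>2"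
    using h by (intro power_mono) auto
  also have "\<dots> \<le> 1 + y + 3/2 * y\<^sup>2"
  proof -
    have "(y+6)*(y-2) \<le> 0" using assms by (intro mult_nonneg_nonpos) auto
    then have "y\<^sup>2 * ((y+6)*(y-2)) \<le> 0" by (simp add: mult_nonneg_nonpos)
    then show ?thesis by (simp add: power2_eq_square algebra_simps) 
  qed
  finally show ?thesis .
qed



lemma exp_finite:
  fixes g :: "'a \<Rightarrow> real"
  assumes "finite A" "set_pmf M \<subseteq> A"
  shows "measure_pmf.expectation M g = (\<Sum>a\<in>A. pmf M a * g a)"
  using integral_measure_pmf[OF assms(1), of M g] assms(2) by auto

lemma exp_bind_finite:
  fixes g :: "'b \<Rightarrow> real"
  assumes A: "finite A" "set_pmf M \<subseteq> A" and B: "finite B" "\<And>x. x \<in> A \<Longrightarrow> set_pmf (N x) \<subseteq> B"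
  shows "measure_pmf.expectation (bind_pmf M N) g
       = (\<Sum>x\<in>A. pmf M x * measure_pmf.expectation (N x) g)"
proof -
  have sub: "set_pmf (bind_pmf M N) \<subseteq> B" using A B by auto
  have "measure_pmf.expectation (bind_pmf M N) g = (\<Sum>y\<in>B. pmf (bind_pmf M N) y * g y)"
    by (rule exp_finite[OF B(1) sub])
  also have "\<dots> = (\<Sum>y\<in>B. (\<Sum>x\<in>A. pmf M x * pmf (N x) y) * g y)"
    by (simp add: pmf_bind exp_finite[OF A] mult.commute)
  also have "\<dots> = (\<Sum>x\<in>A. pmf M x * (\<Sum>y\<in>B. pmf (N x) y * g y))"
    by (simp add: sum_distrib_left sum_distrib_right sum.swap[of _ B A] mult.assoc)
  also have "\<dots> = (\<Sum>x\<in>A. pmf M x * measure_pmf.expectation (N x) g)"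
    using B exp_finite by (metis (no_types, lifting) A(2) pmf_eq_0_set_pmf subsetD sum.cong mult_eq_0_iff)
  finally show ?thesis .
qed

lemma pmf_embed_finite:
  fixes f :: "'a \<Rightarrow> real"
  assumes "finite A" "\<And>x. x \<notin> A \<Longrightarrow> f x = 0" "\<And>x. 0 \<le> f x" "(\<Sum>x\<in>A. f x) = 1"
  shows "pmf (embed_pmf f) x = f x" "set_pmf (embed_pmf f) \<subseteq> A"
proof -
  have "(\<integral>\<^sup>+x. ennreal (f x) \<partial>count_space UNIV) = (\<Sum>x\<in>A. ennreal (f x))"
    by (rule nn_integral_count_space') (use assms in auto)
  also have "\<dots> = 1" using assms by (simp add: sum_ennreal[symmetric])
  finally have p: "(\<integral>\<^sup>+x. ennreal (f x) \<partial>count_space UNIV) = 1" .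
  show "pmf (embed_pmf f) x = f x" by (rule pmf_embed_pmf[OF assms(3) p])
  show "set_pmf (embed_pmf f) \<subseteq> A" using set_embed_pmf[OF assms(3) p] assms(2) by auto
qed



locale mnlS =
  fixes S :: "nat set" and v :: "nat \<Rightarrow> real"
  assumes finS: "finite S" and zS: "0 \<notin> S" and vnn: "\<And>j. j \<in> S \<Longrightarrow> 0 \<le> v j"
begin

definition "Z = 1 + (\<Sum>j\<in>S. v j)"

lemma Z_ge1: "1 \<le> Z" unfolding Z_def using vnn by (simp add: sum_nonneg)
lemma Z_pos: "0 < Z" using Z_ge1 by simp

lemma mp_S: "i \<in> S \<Longrightarrow> mnl_prob S v i = v i / Z" unfolding mnl_prob_def Z_def by simp
lemma mp_0: "mnl_prob S v 0 = 1 / Z" unfolding mnl_prob_def Z_def using zS by simp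
lemma mp_out: "i \<notin> insert 0 S \<Longrightarrow> mnl_prob S v i = 0" unfolding mnl_prob_def by simp
lemma mp_nn: "0 \<le> mnl_prob S v i"
  unfolding mnl_prob_def using vnn Z_pos unfolding Z_def by (auto simp: sum_nonneg)

lemma sumS: "(\<Sum>i\<in>S. mnl_prob S v i) = (Z - 1) / Z"
  by (simp add: mp_S sum_divide_distrib[symmetric] Z_def)

lemma sumS_le1: "(\<Sum>i\<in>S. mnl_prob S v i) \<le> 1"
  using sumS Z_pos by (simp add: divide_le_eq)

lemma sum_all: "(\<Sum>i\<in>insert 0 S. mnl_prob S v i) = 1"
proof -
  have "Z \<noteq> 0" using Z_pos by simp
  then show ?thesis using zS finS by (simp add: sumS mp_0 add_divide_distrib[symmetric])
qed

lemma mp_half: assumes "\<And>j. j \<in> S \<Longrightarrow> v j \<le> 1" "i \<in> S" shows "mnl_prob S v i \<le> 1/2"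
proof -
  have "v i \<le> (\<Sum>j\<in>S. v j)" using assms(2) finS vnn by (intro member_le_sum) auto
  then have "2 * v i \<le> Z" using assms unfolding Z_def by force
  then show ?thesis using mp_S[OF assms(2)] Z_pos by (simp add: divide_le_eq)
qed

lemma rev_eq: "mnl_rev S v r = (\<Sum>i\<in>S. r i * mnl_prob S v i)"
  unfolding mnl_rev_def by (simp add: mp_S Z_def[symmetric] sum_divide_distrib)

lemma pmf_mnl: "pmf (mnl_pmf S v) i = mnl_prob S v i"
  and set_mnl: "set_pmf (mnl_pmf S v) \<subseteq> insert 0 S"
  unfolding mnl_pmf_def
  using pmf_embed_finite[of "insert 0 S" "mnl_prob S v"] finS mp_out mp_nn sum_all by auto

lemma exp_mnl: "measure_pmf.expectation (mnl_pmf S v) g = (\<Sum>i\<in>insert 0 S. mnl_prob S v i * g i)"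
  using exp_finite[OF _ set_mnl] finS by (simp add: pmf_mnl)

end


lemma sq_formula:
  fixes c :: "nat \<Rightarrow> real"
  assumes "finite S"
  shows "i \<in> S \<Longrightarrow> (\<Sum>j\<in>S. (c j - (if j = i then 1 else 0))\<^sup>2) = (\<Sum>j\<in>S. (c j)\<^sup>2) - 2 * c i + 1"
    and "i \<notin> S \<Longrightarrow> (\<Sum>j\<in>S. (c j - (if j = i then 1 else 0))\<^sup>2) = (\<Sum>j\<in>S. (c j)\<^sup>2)"
proof -
  assume i: "i \<in> S"
  have "(\<Sum>j\<in>S. (c j - (if j = i then 1 else 0))\<^sup>2)
      = (\<Sum>j\<in>S. (c j)\<^sup>2 + (if j = i then 1 - 2 * c j else 0))"
    by (rule sum.cong) (auto simp: power2_eq_square algebra_simps)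
  also have "\<dots> = (\<Sum>j\<in>S. (c j)\<^sup>2) + (1 - 2 * c i)"
    using assms i by (simp add: sum.distrib)
  finally show "(\<Sum>j\<in>S. (c j - (if j = i then 1 else 0))\<^sup>2) = (\<Sum>j\<in>S. (c j)\<^sup>2) - 2 * c i + 1" by simp
next
  assume "i \<notin> S"
  then show "(\<Sum>j\<in>S. (c j - (if j = i then 1 else 0))\<^sup>2) = (\<Sum>j\<in>S. (c j)\<^sup>2)"
    by (intro sum.cong) auto
qed

lemma sq_half: fixes x :: real assumes "0 \<le> x" "x \<le> 1/2" shows "x\<^sup>2 \<le> x/2"
proof -
  have "0 \<le> x * (1/2 - x)" using assms by simp
  then show ?thesis by (simp add: power2_eq_square algebra_simps)
qed

lemma conc_gen:
  fixes a b :: "nat \<Rightarrow> real" and K :: real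
  assumes fin: "finite S" and z: "0 \<notin> S"
    and ab: "\<And>j. j \<in> S \<Longrightarrow> 0 \<le> a j \<and> a j \<le> 1/2 \<and> 0 \<le> b j \<and> b j \<le> 1/2"
    and sa: "(\<Sum>j\<in>S. a j) \<le> 1" and sb: "(\<Sum>j\<in>S. b j) \<le> 1" and K: "1 \<le> K"
  defines "sq \<equiv> \<lambda>c i. (\<Sum>j\<in>S. (c j - (if j = i then 1 else (0::real)))\<^sup>2)"
  shows "(1 - (\<Sum>j\<in>S. b j)) * exp (-(sq a 0 - sq b 0) / (4*K))
         + (\<Sum>i\<in>S. b i * exp (-(sq a i - sq b i) / (4*K)))
       \<le> 1 - (\<Sum>j\<in>S. (a j - b j)\<^sup>2) / (16*K)"
proof -
  define \<beta> where "\<beta> = 1 / (4*K)"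
  have b0: "0 < \<beta>" "\<beta> \<le> 1/4" using K by (auto simp: \<beta>_def field_simps)
  define C where "C = (\<Sum>j\<in>S. (a j)\<^sup>2 - (b j)\<^sup>2)"
  define A where "A = (\<Sum>j\<in>S. (a j - b j)\<^sup>2)"
  define m where "m = (\<Sum>j\<in>S. b j * (a j - b j))"
  define Bs where "Bs = (\<Sum>j\<in>S. b j)"
  have D0: "sq a 0 - sq b 0 = C" using sq_formula(2)[OF fin, of 0] z
    by (simp add: sq_def C_def sum_subtractf)
  have Di: "sq a i - sq b i = C - 2 * (a i - b i)" if "i \<in> S" for i
    using sq_formula(1)[OF fin that] by (simp add: sq_def C_def sum_subtractf)
  have a2: "(\<Sum>j\<in>S. (a j)\<^sup>2) \<le> 1/2"
  proof -
    have "(\<Sum>j\<in>S. (a j)\<^sup>2) \<le> (\<Sum>j\<in>S. a j / 2)"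
      using ab sq_half by (intro sum_mono) auto
    also have "\<dots> \<le> 1/2" using sa by (simp add: sum_divide_distrib[symmetric])
    finally show ?thesis .
  qed
  have b2: "(\<Sum>j\<in>S. (b j)\<^sup>2) \<le> 1/2"
  proof -
    have "(\<Sum>j\<in>S. (b j)\<^sup>2) \<le> (\<Sum>j\<in>S. b j / 2)"
      using ab sq_half by (intro sum_mono) auto
    also have "\<dots> \<le> 1/2" using sb by (simp add: sum_divide_distrib[symmetric])
    finally show ?thesis .
  qed
  have Cb: "\<bar>C\<bar> \<le> 1/2" using a2 b2 unfolding C_def sum_subtractf
    by (smt (verit) sum_nonneg zero_le_power2)
  have A1: "A \<le> 1"
  proof -
    have "A \<le> (\<Sum>j\<in>S. (a j + b j)/2)" unfolding A_def
    proof (intro sum_mono)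
      fix j assume "j \<in> S"
      have abj: "0 \<le> a j" "a j \<le> 1/2" "0 \<le> b j" "b j \<le> 1/2" using ab[OF \<open>j \<in> S\<close>] by auto
      have h: "\<bar>a j - b j\<bar> \<le> 1/2" "\<bar>a j - b j\<bar> \<le> a j + b j" using abj by linarith+
      have "(a j - b j)\<^sup>2 = \<bar>a j - b j\<bar> * \<bar>a j - b j\<bar>" by (simp add: power2_eq_square abs_mult_self)
      also have "\<dots> \<le> (a j + b j) * (1/2)" using h by (intro mult_mono) auto
      finally show "(a j - b j)\<^sup>2 \<le> (a j + b j)/2" by simp
    qed
    also have "\<dots> \<le> 1" using sa sb by (simp add: sum_divide_distrib[symmetric] sum.distrib)
    finally show ?thesis .
  qed
  have A0: "0 \<le> A" unfolding A_def by (simp add: sum_nonneg)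
  have eb: "exp (-\<beta> * y) \<le> 1 - \<beta> * y + \<beta>\<^sup>2 * y\<^sup>2" if "\<bar>y\<bar> \<le> 3/2" for y
  proof -
    have "\<beta> * \<bar>y\<bar> \<le> (1/4) * (3/2)" using that b0 by (intro mult_mono) auto
    then have "\<bar>-\<beta> * y\<bar> \<le> 1" using b0 by (simp add: abs_mult)
    from exp_quad1[OF this] have "exp (-\<beta> * y) \<le> 1 + (-\<beta> * y) + (-\<beta> * y)\<^sup>2" .
    also have "(-\<beta> * y)\<^sup>2 = \<beta>\<^sup>2 * y\<^sup>2" by (simp add: power_mult_distrib)
    finally show ?thesis by simp
  qed
  have q0: "0 \<le> 1 - Bs" using sb Bs_def by simp
  have h1: "(1 - Bs) * exp (-(sq a 0 - sq b 0) / (4*K)) \<le> (1 - Bs) * (1 - \<beta> * C + \<beta>\<^sup>2 * C\<^sup>2)"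
    using eb[of C] Cb q0 D0 by (intro mult_left_mono) (auto simp: \<beta>_def)
  have h2: "(\<Sum>i\<in>S. b i * exp (-(sq a i - sq b i) / (4*K)))
     \<le> (\<Sum>i\<in>S. b i * (1 - \<beta> * (C - 2 * (a i - b i)) + \<beta>\<^sup>2 * (C - 2 * (a i - b i))\<^sup>2))"
  proof (intro sum_mono mult_left_mono)
    fix i assume i: "i \<in> S"
    have c1: "-1/2 \<le> C" "C \<le> 1/2" using Cb by linarith+
    have c2: "0 \<le> a i" "a i \<le> 1/2" "0 \<le> b i" "b i \<le> 1/2" using ab[OF i] by auto
    have "\<bar>C - 2 * (a i - b i)\<bar> \<le> 3/2" unfolding abs_le_iff right_diff_distrib using c1 c2 by (intro conjI) linarith+
    then show "exp (-(sq a i - sq b i) / (4*K)) \<le> 1 - \<beta> * (C - 2 * (a i - b i)) + \<beta>\<^sup>2 * (C - 2 * (a i - b i))\<^sup>2"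
    proof -
      have e: "-(sq a i - sq b i) / (4*K) = -\<beta> * (C - 2 * (a i - b i))" unfolding Di[OF i] \<beta>_def using K by (simp add: field_simps)
      show ?thesis unfolding e by (rule eb) fact
    qed
    show "0 \<le> b i" using ab[OF i] by simp
  qed
  have h3: "(1 - Bs) * (1 - \<beta> * C + \<beta>\<^sup>2 * C\<^sup>2)
     + (\<Sum>i\<in>S. b i * (1 - \<beta> * (C - 2 * (a i - b i)) + \<beta>\<^sup>2 * (C - 2 * (a i - b i))\<^sup>2))
     = 1 - \<beta> * (C - 2*m) + \<beta>\<^sup>2 * (C\<^sup>2 - 4*C*m + 4 * (\<Sum>i\<in>S. b i * (a i - b i)\<^sup>2))"
  proof -
    have pt: "b i * (1 - \<beta> * (C - 2 * (a i - b i)) + \<beta>\<^sup>2 * (C - 2 * (a i - b i))\<^sup>2)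
       = b i * (1 - \<beta> * C + \<beta>\<^sup>2 * C\<^sup>2) + (2*\<beta> - 4*\<beta>\<^sup>2*C) * (b i * (a i - b i))
         + 4 * \<beta>\<^sup>2 * (b i * (a i - b i)\<^sup>2)" for i
      by (simp add: power2_eq_square algebra_simps)
    have "(\<Sum>i\<in>S. b i * (1 - \<beta> * (C - 2 * (a i - b i)) + \<beta>\<^sup>2 * (C - 2 * (a i - b i))\<^sup>2))
       = Bs * (1 - \<beta> * C + \<beta>\<^sup>2 * C\<^sup>2) + (2*\<beta> - 4*\<beta>\<^sup>2*C) * m
         + 4 * \<beta>\<^sup>2 * (\<Sum>i\<in>S. b i * (a i - b i)\<^sup>2)"
      unfolding pt sum.distrib Bs_def m_def sum_distrib_left[symmetric] sum_distrib_right[symmetric] ..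
    then show ?thesis by (simp add: power2_eq_square algebra_simps)
  qed
  have h4: "C - 2*m = A" unfolding C_def m_def A_def sum_subtractf[symmetric] sum_distrib_left
    by (rule sum.cong) (auto simp: power2_eq_square algebra_simps)
  have h5: "(\<Sum>i\<in>S. b i * (a i - b i)\<^sup>2) \<le> A/2" unfolding A_def sum_divide_distrib
  proof (intro sum_mono)
    fix i assume i: "i \<in> S"
    have "b i * (a i - b i)\<^sup>2 \<le> (1/2) * (a i - b i)\<^sup>2" using ab[OF i] by (intro mult_right_mono) auto
    then show "b i * (a i - b i)\<^sup>2 \<le> (a i - b i)\<^sup>2 / 2" by simp
  qed
  have "C\<^sup>2 - 4*C*m + 4 * (\<Sum>i\<in>S. b i * (a i - b i)\<^sup>2) = A\<^sup>2 - 4*m\<^sup>2 + 4 * (\<Sum>i\<in>S. b i * (a i - b i)\<^sup>2)"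
  proof -
    have cc: "C = A + 2*m" using h4 by simp
    show ?thesis unfolding cc by (simp add: power2_eq_square algebra_simps)
  qed
  also have "\<dots> \<le> A\<^sup>2 + 2*A" using h5 zero_le_power2[of m] by linarith
  finally have h6: "\<beta>\<^sup>2 * (C\<^sup>2 - 4*C*m + 4 * (\<Sum>i\<in>S. b i * (a i - b i)\<^sup>2)) \<le> \<beta>\<^sup>2 * (A\<^sup>2 + 2*A)"
    by (simp add: mult_left_mono)
  have L: "(1 - Bs) * exp (-(sq a 0 - sq b 0) / (4*K))
         + (\<Sum>i\<in>S. b i * exp (-(sq a i - sq b i) / (4*K)))
       \<le> 1 - \<beta> * A + \<beta>\<^sup>2 * (A\<^sup>2 + 2 * A)"
    using h1 h2 h3[unfolded h4] h6 by linarith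
  have "\<beta>\<^sup>2 * (A\<^sup>2 + 2 * A) = (\<beta> * A) * (\<beta> * (A + 2))" by (simp add: power2_eq_square algebra_simps)
  also have "\<dots> \<le> (\<beta> * A) * (3/4)"
  proof (rule mult_left_mono)
    have "\<beta> * (A + 2) \<le> (1/4) * 3" using b0 A1 A0 by (intro mult_mono) auto
    then show "\<beta> * (A + 2) \<le> 3/4" by simp
    show "0 \<le> \<beta> * A" using b0 A0 by simp
  qed
  finally have h7: "\<beta>\<^sup>2 * (A\<^sup>2 + 2 * A) \<le> \<beta> * A * (3/4)" .
  have h8: "\<beta> * A / 4 = A / (16 * K)" by (simp add: \<beta>_def)
  have "(1 - Bs) * exp (-(sq a 0 - sq b 0) / (4*K))
         + (\<Sum>i\<in>S. b i * exp (-(sq a i - sq b i) / (4*K))) \<le> 1 - A / (16 * K)"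
    using L h7 h8 by linarith
  then show ?thesis unfolding A_def Bs_def .
qed


lemma rev_lip:
  fixes v w r :: "nat \<Rightarrow> real"
  assumes fin: "finite S" and h: "\<And>i. i \<in> S \<Longrightarrow> 0 \<le> v i \<and> 0 \<le> w i \<and> 0 \<le> r i \<and> r i \<le> 1"
  shows "mnl_rev S v r - mnl_rev S w r \<le> (\<Sum>i\<in>S. \<bar>v i - w i\<bar>)"
proof -
  define Zv where "Zv = 1 + (\<Sum>i\<in>S. v i)"
  define Zw where "Zw = 1 + (\<Sum>i\<in>S. w i)"
  define Rw where "Rw = (\<Sum>i\<in>S. r i * w i) / Zw"
  have Zv1: "1 \<le> Zv" unfolding Zv_def using h by (simp add: sum_nonneg)
  have Zw1: "1 \<le> Zw" unfolding Zw_def using h by (simp add: sum_nonneg)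
  have Rw0: "0 \<le> Rw" unfolding Rw_def using h Zw1 by (intro divide_nonneg_pos sum_nonneg) auto
  have "(\<Sum>i\<in>S. r i * w i) \<le> (\<Sum>i\<in>S. w i)"
    using h by (intro sum_mono) (auto intro!: mult_left_le_one_le)
  then have Rw1: "Rw \<le> 1" unfolding Rw_def using Zw1 by (simp add: divide_le_eq Zw_def)
  have key: "(\<Sum>i\<in>S. (v i - w i) * (r i - Rw)) = (\<Sum>i\<in>S. r i * v i) - (\<Sum>i\<in>S. r i * w i)
       - Rw * ((\<Sum>i\<in>S. v i) - (\<Sum>i\<in>S. w i))"
  proof -
    have "(\<Sum>i\<in>S. (v i - w i) * (r i - Rw)) = (\<Sum>i\<in>S. r i * v i - r i * w i - (Rw * v i - Rw * w i))"
      by (rule sum.cong) (auto simp: algebra_simps)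
    also have "\<dots> = (\<Sum>i\<in>S. r i * v i) - (\<Sum>i\<in>S. r i * w i) - (Rw * (\<Sum>i\<in>S. v i) - Rw * (\<Sum>i\<in>S. w i))"
      by (simp add: sum_subtractf sum_distrib_left)
    finally show ?thesis by (simp add: algebra_simps)
  qed
  have RwZ: "Rw * Zw = (\<Sum>i\<in>S. r i * w i)" unfolding Rw_def using Zw1 by simp
  have eq: "mnl_rev S v r - mnl_rev S w r = (\<Sum>i\<in>S. (v i - w i) * (r i - Rw)) / Zv"
  proof -
    have "mnl_rev S v r - mnl_rev S w r = (\<Sum>i\<in>S. r i * v i) / Zv - Rw"
      unfolding mnl_rev_def Zv_def[symmetric] Zw_def[symmetric] Rw_def ..
    also have "\<dots> = ((\<Sum>i\<in>S. r i * v i) - Rw * Zv) / Zv" using Zv1 by (simp add: field_simps)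
    also have "Rw * Zv = Rw * Zw + Rw * ((\<Sum>i\<in>S. v i) - (\<Sum>i\<in>S. w i))"
      unfolding Zv_def Zw_def by (simp add: algebra_simps)
    finally show ?thesis unfolding key RwZ by (simp add: algebra_simps)
  qed
  have "(\<Sum>i\<in>S. (v i - w i) * (r i - Rw)) / Zv \<le> (\<Sum>i\<in>S. (v i - w i) * (r i - Rw))" 
    if "0 \<le> (\<Sum>i\<in>S. (v i - w i) * (r i - Rw))" using that Zv1 by (simp add: divide_le_eq mult_le_cancel_left1 order_trans[OF _ mult_right_mono[of 1 Zv]])
  moreover have "(\<Sum>i\<in>S. (v i - w i) * (r i - Rw)) \<le> (\<Sum>i\<in>S. \<bar>v i - w i\<bar>)"
  proof (intro sum_mono)
    fix i assume i: "i \<in> S"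
    have "\<bar>r i - Rw\<bar> \<le> 1" using h[OF i] Rw0 Rw1 by (auto simp: abs_le_iff)
    have "(v i - w i) * (r i - Rw) \<le> \<bar>v i - w i\<bar> * \<bar>r i - Rw\<bar>" by (simp add: abs_mult[symmetric])
    also have "\<dots> \<le> \<bar>v i - w i\<bar> * 1" using \<open>\<bar>r i - Rw\<bar> \<le> 1\<close> by (intro mult_left_mono) auto
    finally show "(v i - w i) * (r i - Rw) \<le> \<bar>v i - w i\<bar>" by simp
  qed
  moreover have "(\<Sum>i\<in>S. (v i - w i) * (r i - Rw)) / Zv \<le> 0" if "(\<Sum>i\<in>S. (v i - w i) * (r i - Rw)) < 0"
    using that Zv1 by (simp add: divide_nonpos_pos)
  moreover have "0 \<le> (\<Sum>i\<in>S. \<bar>v i - w i\<bar>)" by (simp add: sum_nonneg)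
  ultimately show ?thesis unfolding eq by linarith
qed

lemma mu_lip:
  fixes v w :: "nat \<Rightarrow> real"
  assumes fin: "finite S" and h: "\<And>i. i \<in> S \<Longrightarrow> 0 \<le> v i \<and> v i \<le> 1 \<and> 0 \<le> w i \<and> w i \<le> 1"
  shows "(\<Sum>i\<in>S. (v i - w i)\<^sup>2) \<le> (real (card S) + 1)^4 *
           (\<Sum>i\<in>S. (v i / (1 + (\<Sum>j\<in>S. v j)) - w i / (1 + (\<Sum>j\<in>S. w j)))\<^sup>2)"
proof -
  define Zv where "Zv = 1 + (\<Sum>j\<in>S. v j)"
  define Zw where "Zw = 1 + (\<Sum>j\<in>S. w j)"
  define k where "k = real (card S)"
  define d where "d i = v i / Zv - w i / Zw" for i
  define t where "t = (\<Sum>j\<in>S. d j)"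
  define s where "s = (\<Sum>j\<in>S. \<bar>d j\<bar>)"
  define Q where "Q = (\<Sum>j\<in>S. (d j)\<^sup>2)"
  have Zv1: "1 \<le> Zv" unfolding Zv_def using h by (simp add: sum_nonneg)
  have Zw1: "1 \<le> Zw" unfolding Zw_def using h by (simp add: sum_nonneg)
  have Zvk: "Zv \<le> 1 + k"
  proof -
    have "(\<Sum>j\<in>S. v j) \<le> (\<Sum>j\<in>S. 1)" using h by (intro sum_mono) auto
    then show ?thesis unfolding Zv_def k_def by simp
  qed
  have t_eq: "t = 1 / Zw - 1 / Zv"
  proof -
    have "t = (\<Sum>j\<in>S. v j) / Zv - (\<Sum>j\<in>S. w j) / Zw"
      unfolding t_def d_def by (simp add: sum_subtractf sum_divide_distrib)
    also have "\<dots> = (Zv - 1) / Zv - (Zw - 1) / Zw" unfolding Zv_def Zw_def by simp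
    also have "\<dots> = 1 / Zw - 1 / Zv" using Zv1 Zw1 by (simp add: field_simps)
    finally show ?thesis .
  qed
  have ident: "v i - w i = Zv * (d i + w i * t)" for i
    unfolding t_eq d_def using Zv1 Zw1 by (simp add: field_simps)
  have ts: "\<bar>t\<bar> \<le> s" unfolding t_def s_def by (rule sum_abs)
  have s0: "0 \<le> s" unfolding s_def by (simp add: sum_nonneg)
  have pt: "(v i - w i)\<^sup>2 \<le> (1 + k)\<^sup>2 * (\<bar>d i\<bar> + s)\<^sup>2" if i: "i \<in> S" for i
  proof -
    have "\<bar>w i * t\<bar> \<le> 1 * s" unfolding abs_mult using h[OF i] ts by (intro mult_mono) auto
    then have "\<bar>d i + w i * t\<bar> \<le> \<bar>d i\<bar> + s" by (smt (verit))
    then have "\<bar>v i - w i\<bar> \<le> (1 + k) * (\<bar>d i\<bar> + s)"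
      unfolding ident abs_mult using Zv1 Zvk by (intro mult_mono) auto
    then have "\<bar>v i - w i\<bar>\<^sup>2 \<le> ((1 + k) * (\<bar>d i\<bar> + s))\<^sup>2" by (intro power_mono) auto
    then show ?thesis by (simp add: power_mult_distrib)
  qed
  have s2: "s\<^sup>2 \<le> k * Q"
  proof -
    have "s\<^sup>2 = (\<Sum>j\<in>S. 1 * \<bar>d j\<bar>)\<^sup>2" unfolding s_def by simp
    also have "\<dots> \<le> (\<Sum>j\<in>S. 1\<^sup>2) * (\<Sum>j\<in>S. \<bar>d j\<bar>\<^sup>2)" by (rule Cauchy_Schwarz_ineq_sum)
    also have "\<dots> = k * Q" unfolding k_def Q_def by simp
    finally show ?thesis .
  qed
  have expand: "(\<Sum>i\<in>S. (\<bar>d i\<bar> + s)\<^sup>2) = Q + 2 * s * s + k * s\<^sup>2"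
  proof -
    have "(\<Sum>i\<in>S. (\<bar>d i\<bar> + s)\<^sup>2) = (\<Sum>i\<in>S. (d i)\<^sup>2 + 2 * s * \<bar>d i\<bar> + s\<^sup>2)"
      by (rule sum.cong) (auto simp: power2_eq_square algebra_simps)
    also have "\<dots> = Q + 2 * s * s + k * s\<^sup>2"
      unfolding Q_def k_def sum.distrib sum_distrib_left[symmetric] s_def by simp
    finally show ?thesis .
  qed
  have k0: "0 \<le> k" unfolding k_def by simp
  have Q0: "0 \<le> Q" unfolding Q_def by (simp add: sum_nonneg)
  have "(\<Sum>i\<in>S. (v i - w i)\<^sup>2) \<le> (\<Sum>i\<in>S. (1 + k)\<^sup>2 * (\<bar>d i\<bar> + s)\<^sup>2)"
    using pt by (intro sum_mono) auto
  also have "\<dots> = (1 + k)\<^sup>2 * (Q + (2 + k) * s\<^sup>2)"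
    unfolding sum_distrib_left[symmetric] expand by (simp add: power2_eq_square algebra_simps)
  also have "\<dots> \<le> (1 + k)\<^sup>2 * (Q + (2 + k) * (k * Q))"
    using s2 k0 by (intro mult_left_mono add_left_mono) auto
  also have "\<dots> = (k + 1)^4 * Q" by (simp add: power2_eq_square power4_eq_xxxx algebra_simps)
  finally show ?thesis unfolding Q_def d_def Zv_def Zw_def k_def .
qed

lemma sum_pos_prob:
  fixes p :: "'f \<Rightarrow> real"
  assumes "finite F" "\<And>f. f \<in> F \<Longrightarrow> 0 \<le> p f" "(\<Sum>f\<in>F. p f) = 1" "\<And>f. f \<in> F \<Longrightarrow> 0 < g f"
  shows "0 < (\<Sum>f\<in>F. p f * g f)"
proof -
  obtain f where f: "f \<in> F" "p f > 0"
  proof (rule ccontr)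
    assume "\<not> thesis"
    then have "\<And>f. f \<in> F \<Longrightarrow> p f = 0" using assms(2) that by force
    then have "(\<Sum>f\<in>F. p f) = 0" by simp
    then show False using assms(3) by simp
  qed
  have a: "0 < p f * g f" using f assms(4) by simp
  have b: "\<And>i. i \<in> F \<Longrightarrow> 0 \<le> p i * g i" using assms(2,4) by (simp add: less_imp_le)
  show ?thesis using sum_pos2[where f="\<lambda>i. p i * g i", OF assms(1) f(1) a b] .
qed

lemma fg_bound:
  fixes p X B :: "'f \<Rightarrow> real" and \<eta> :: real
  assumes fin: "finite F" and p0: "\<And>f. f \<in> F \<Longrightarrow> 0 \<le> p f" and p1: "(\<Sum>f\<in>F. p f) = 1"
    and X: "\<And>f. f \<in> F \<Longrightarrow> \<bar>X f\<bar> \<le> 1" and eta: "0 < \<eta>" "\<eta> \<le> 1"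
  shows "ln (\<Sum>f\<in>F. p f * exp (\<eta> * X f + B f))
    \<le> \<eta> * (\<Sum>f\<in>F. p f * X f) + 3 * \<eta>\<^sup>2 + ((\<Sum>f\<in>F. p f * exp (2 * B f)) - 1) / 2"
proof -
  define T where "T = (\<Sum>f\<in>F. p f * exp (\<eta> * X f + B f))"
  have T0: "0 < T" unfolding T_def by (rule sum_pos_prob[OF fin p0 p1]) auto
  have amgm: "exp (a + b) \<le> (exp (2 * a) + exp (2 * b)) / 2" for a b :: real
  proof -
    have "0 \<le> (exp a - exp b)\<^sup>2" by simp
    moreover have "exp (2 * a) = (exp a)\<^sup>2" "exp (2 * b) = (exp b)\<^sup>2" "exp (a + b) = exp a * exp b"
      by (simp_all add: power2_eq_square exp_add[symmetric])
    ultimately show ?thesis by (simp add: power2_eq_square algebra_simps)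
  qed
  have ex: "exp (2 * (\<eta> * X f)) \<le> 1 + 2 * \<eta> * X f + 6 * \<eta>\<^sup>2" if f: "f \<in> F" for f
  proof -
    have a: "\<bar>2 * (\<eta> * X f)\<bar> \<le> 2" using X[OF f] eta by (simp add: abs_mult mult_le_one)
    have "\<bar>X f\<bar> * \<bar>X f\<bar> \<le> 1 * 1" using X[OF f] by (intro mult_mono) auto
    then have "(X f)\<^sup>2 \<le> 1" by (simp add: power2_eq_square)
    then have "\<eta>\<^sup>2 * (X f)\<^sup>2 \<le> \<eta>\<^sup>2" using mult_left_mono[of "(X f)\<^sup>2" 1 "\<eta>\<^sup>2"] by simp
    moreover have "exp (2 * (\<eta> * X f)) \<le> 1 + 2 * (\<eta> * X f) + 3/2 * (2 * (\<eta> * X f))\<^sup>2" by (rule exp_quad2[OF a])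
    moreover have "3/2 * (2 * (\<eta> * X f))\<^sup>2 = 6 * (\<eta>\<^sup>2 * (X f)\<^sup>2)" by (simp add: power2_eq_square)
    ultimately show ?thesis by linarith
  qed
  have "T \<le> (\<Sum>f\<in>F. p f * ((exp (2 * (\<eta> * X f)) + exp (2 * B f)) / 2))"
    unfolding T_def using p0 amgm by (intro sum_mono mult_left_mono) auto
  also have "\<dots> = ((\<Sum>f\<in>F. p f * exp (2 * (\<eta> * X f))) + (\<Sum>f\<in>F. p f * exp (2 * B f))) / 2"
    by (simp add: sum_divide_distrib[symmetric] sum.distrib algebra_simps)
  also have "(\<Sum>f\<in>F. p f * exp (2 * (\<eta> * X f))) \<le> (\<Sum>f\<in>F. p f * (1 + 2 * \<eta> * X f + 6 * \<eta>\<^sup>2))"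
    using p0 ex by (intro sum_mono mult_left_mono) auto
  also have "\<dots> = 1 + 2 * \<eta> * (\<Sum>f\<in>F. p f * X f) + 6 * \<eta>\<^sup>2"
  proof -
    have "(\<Sum>f\<in>F. p f * (1 + 2 * \<eta> * X f + 6 * \<eta>\<^sup>2)) = (\<Sum>f\<in>F. p f + (2 * \<eta>) * (p f * X f) + (6 * \<eta>\<^sup>2) * p f)"
      by (rule sum.cong) (auto simp: algebra_simps)
    also have "\<dots> = (\<Sum>f\<in>F. p f) + (2 * \<eta>) * (\<Sum>f\<in>F. p f * X f) + (6 * \<eta>\<^sup>2) * (\<Sum>f\<in>F. p f)"
      by (simp add: sum.distrib sum_distrib_left)
    finally show ?thesis using p1 by simp
  qed
  finally have "T \<le> (1 + 2 * \<eta> * (\<Sum>f\<in>F. p f * X f) + 6 * \<eta>\<^sup>2 + (\<Sum>f\<in>F. p f * exp (2 * B f))) / 2"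
    by simp
  moreover have "ln T \<le> T - 1" by (rule ln_le_minus_one[OF T0])
  ultimately show ?thesis unfolding T_def[symmetric] by (simp add: field_simps)
qed

lemma amgm_gamma:
  fixes x \<gamma> :: real assumes "0 < \<gamma>" shows "x \<le> \<gamma>/2 + x\<^sup>2 / (2*\<gamma>)"
proof -
  have "0 \<le> (x - \<gamma>)\<^sup>2" by simp
  then have "2*\<gamma>*x \<le> x\<^sup>2 + \<gamma>\<^sup>2" by (simp add: power2_eq_square algebra_simps)
  then show ?thesis using assms by (simp add: field_simps power2_eq_square)
qed

lemma weighted_CS:
  fixes p a b :: "'f \<Rightarrow> real"
  assumes "\<And>f. f \<in> F \<Longrightarrow> 0 \<le> p f"
  shows "(\<Sum>f\<in>F. p f * a f * b f)\<^sup>2 \<le> (\<Sum>f\<in>F. p f * (a f)\<^sup>2) * (\<Sum>f\<in>F. p f * (b f)\<^sup>2)"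
proof -
  have "(\<Sum>f\<in>F. p f * a f * b f) = (\<Sum>f\<in>F. (sqrt (p f) * a f) * (sqrt (p f) * b f))"
    using assms by (intro sum.cong) (auto simp: algebra_simps real_sqrt_mult[symmetric])
  moreover have "(\<Sum>f\<in>F. p f * (a f)\<^sup>2) = (\<Sum>f\<in>F. (sqrt (p f) * a f)\<^sup>2)"
    using assms by (intro sum.cong) (auto simp: power_mult_distrib)
  moreover have "(\<Sum>f\<in>F. p f * (b f)\<^sup>2) = (\<Sum>f\<in>F. (sqrt (p f) * b f)\<^sup>2)"
    using assms by (intro sum.cong) (auto simp: power_mult_distrib)
  ultimately show ?thesis using Cauchy_Schwarz_ineq_sum by metis
qed

lemma decouple:
  fixes p :: "'f \<Rightarrow> real" and S :: "'f \<Rightarrow> nat set" and d :: "'f \<Rightarrow> nat \<Rightarrow> real" and \<gamma> :: real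
  assumes fin: "finite F" and p0: "\<And>f. f \<in> F \<Longrightarrow> 0 \<le> p f" and g0: "0 < \<gamma>"
    and SN: "\<And>g. g \<in> F \<Longrightarrow> S g \<subseteq> {1..N}"
  shows "(\<Sum>g\<in>F. p g * (\<Sum>i\<in>S g. \<bar>d g i\<bar>))
     \<le> real N * \<gamma> / 2 + (1 / (2*\<gamma>)) * (\<Sum>g\<in>F. p g * (\<Sum>f\<in>F. p f * (\<Sum>i\<in>S g. (d f i)\<^sup>2)))"
proof -
  define ind where "ind g i = (if i \<in> S g then 1 else (0::real))" for g i
  have restr: "(\<Sum>i\<in>S g. u i) = (\<Sum>i\<in>{1..N}. ind g i * u i)" if "g \<in> F" for g and u :: "nat \<Rightarrow> real"
  proof -
    have "(\<Sum>i\<in>{1..N}. ind g i * u i) = (\<Sum>i\<in>{1..N}. if i \<in> S g then u i else 0)"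
      unfolding ind_def by (intro sum.cong) auto
    also have "\<dots> = (\<Sum>i\<in>{1..N} \<inter> S g. u i)" by (simp add: sum.inter_restrict)
    also have "{1..N} \<inter> S g = S g" using SN[OF that] by auto
    finally show ?thesis by simp
  qed
  define x where "x i = (\<Sum>g\<in>F. p g * ind g i * \<bar>d g i\<bar>)" for i
  have lhs: "(\<Sum>g\<in>F. p g * (\<Sum>i\<in>S g. \<bar>d g i\<bar>)) = (\<Sum>i\<in>{1..N}. x i)"
  proof -
    have "(\<Sum>g\<in>F. p g * (\<Sum>i\<in>S g. \<bar>d g i\<bar>)) = (\<Sum>g\<in>F. p g * (\<Sum>i\<in>{1..N}. ind g i * \<bar>d g i\<bar>))"
      using restr by (intro sum.cong) auto
    also have "\<dots> = (\<Sum>i\<in>{1..N}. x i)" unfolding x_def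
      by (simp add: sum_distrib_left sum.swap[of _ F] mult.assoc)
    finally show ?thesis .
  qed
  define y where "y i = (\<Sum>g\<in>F. p g * (\<Sum>f\<in>F. p f * (ind g i * (d f i)\<^sup>2)))" for i
  have xy: "(x i)\<^sup>2 \<le> y i" for i
  proof -
    have "(x i)\<^sup>2 \<le> (\<Sum>g\<in>F. p g * (ind g i)\<^sup>2) * (\<Sum>g\<in>F. p g * \<bar>d g i\<bar>\<^sup>2)"
      unfolding x_def by (rule weighted_CS[OF p0])
    also have "(\<Sum>g\<in>F. p g * (ind g i)\<^sup>2) = (\<Sum>g\<in>F. p g * ind g i)"
      unfolding ind_def by (intro sum.cong) auto
    also have "(\<Sum>g\<in>F. p g * ind g i) * (\<Sum>g\<in>F. p g * \<bar>d g i\<bar>\<^sup>2) = y i"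
      unfolding y_def sum_product by (intro sum.cong refl) (simp add: sum_distrib_left algebra_simps)
    finally show ?thesis .
  qed
  have "(\<Sum>i\<in>{1..N}. x i) \<le> (\<Sum>i\<in>{1..N}. \<gamma>/2 + y i / (2*\<gamma>))"
  proof (intro sum_mono)
    fix i
    have "x i \<le> \<gamma>/2 + (x i)\<^sup>2 / (2*\<gamma>)" by (rule amgm_gamma[OF g0])
    also have "\<dots> \<le> \<gamma>/2 + y i / (2*\<gamma>)" using xy[of i] g0 by (simp add: divide_right_mono)
    finally show "x i \<le> \<gamma>/2 + y i / (2*\<gamma>)" .
  qed
  also have "\<dots> = real N * \<gamma> / 2 + (1 / (2*\<gamma>)) * (\<Sum>i\<in>{1..N}. y i)"
    by (simp add: sum.distrib sum_divide_distrib[symmetric])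
  also have "(\<Sum>i\<in>{1..N}. y i) = (\<Sum>g\<in>F. p g * (\<Sum>f\<in>F. p f * (\<Sum>i\<in>S g. (d f i)\<^sup>2)))"
  proof -
    have "(\<Sum>i\<in>{1..N}. y i) = (\<Sum>g\<in>F. p g * (\<Sum>f\<in>F. p f * (\<Sum>i\<in>{1..N}. ind g i * (d f i)\<^sup>2)))"
    proof -
      have "(\<Sum>i\<in>{1..N}. y i) = (\<Sum>i\<in>{1..N}. \<Sum>g\<in>F. \<Sum>f\<in>F. p g * (p f * (ind g i * (d f i)\<^sup>2)))"
        unfolding y_def sum_distrib_left ..
      also have "\<dots> = (\<Sum>g\<in>F. \<Sum>i\<in>{1..N}. \<Sum>f\<in>F. p g * (p f * (ind g i * (d f i)\<^sup>2)))"
        by (rule sum.swap)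
      also have "\<dots> = (\<Sum>g\<in>F. \<Sum>f\<in>F. \<Sum>i\<in>{1..N}. p g * (p f * (ind g i * (d f i)\<^sup>2)))"
        by (rule sum.cong[OF refl], rule sum.swap)
      finally show ?thesis by (simp add: sum_distrib_left)
    qed
    also have "\<dots> = (\<Sum>g\<in>F. p g * (\<Sum>f\<in>F. p f * (\<Sum>i\<in>S g. (d f i)\<^sup>2)))"
      using restr by (intro sum.cong refl) auto
    finally show ?thesis .
  qed
  finally show ?thesis unfolding lhs .
qed


lemma assort_props:
  assumes "S \<in> assortments N K"
  shows "finite S" "S \<subseteq> {1..N}" "0 \<notin> S" "card S \<le> K"
  using assms unfolding assortments_def by (auto intro: finite_subset)

lemma assort_finite: "finite (assortments N K)"
  unfolding assortments_def by (rule finite_subset[of _ "Pow {1..N}"]) auto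

lemma assort_ne: "1 \<le> K \<Longrightarrow> K \<le> N \<Longrightarrow> {1} \<in> assortments N K"
  unfolding assortments_def by auto

lemma rev_bounds:
  fixes v r :: "nat \<Rightarrow> real"
  assumes "finite S" "\<And>j. j \<in> S \<Longrightarrow> 0 \<le> v j \<and> 0 \<le> r j \<and> r j \<le> 1"
  shows "0 \<le> mnl_rev S v r" "mnl_rev S v r \<le> 1"
proof -
  have Z: "0 < 1 + (\<Sum>j\<in>S. v j)" using assms by (simp add: add_pos_nonneg sum_nonneg)
  have n: "0 \<le> (\<Sum>j\<in>S. r j * v j)" using assms by (intro sum_nonneg) auto
  have "(\<Sum>j\<in>S. r j * v j) \<le> (\<Sum>j\<in>S. v j)" using assms by (intro sum_mono) (auto intro!: mult_left_le_one_le)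
  then show "mnl_rev S v r \<le> 1" unfolding mnl_rev_def using Z by (simp add: divide_le_eq)
  show "0 \<le> mnl_rev S v r" unfolding mnl_rev_def using Z n by simp
qed

lemma maxrev_props:
  fixes v r :: "nat \<Rightarrow> real"
  assumes K: "1 \<le> K" "K \<le> N" and h: "\<And>j. j \<in> {1..N} \<Longrightarrow> 0 \<le> v j \<and> 0 \<le> r j \<and> r j \<le> 1"
  shows "0 \<le> max_rev N K v r" "max_rev N K v r \<le> 1"
    "S \<in> assortments N K \<Longrightarrow> mnl_rev S v r \<le> max_rev N K v r"
proof -
  have rb: "0 \<le> mnl_rev S v r \<and> mnl_rev S v r \<le> 1" if "S \<in> assortments N K" for S
  proof -
    have "\<And>j. j \<in> S \<Longrightarrow> 0 \<le> v j \<and> 0 \<le> r j \<and> r j \<le> 1" using assort_props(2)[OF that] h by auto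
    then show ?thesis using rev_bounds[of S v r] assort_props(1)[OF that] by auto
  qed
  have fin: "finite ((\<lambda>S. mnl_rev S v r) ` assortments N K)" by (simp add: assort_finite)
  have ne: "(\<lambda>S. mnl_rev S v r) ` assortments N K \<noteq> {}" using assort_ne[OF K] by auto
  show "S \<in> assortments N K \<Longrightarrow> mnl_rev S v r \<le> max_rev N K v r"
    unfolding max_rev_def using fin by (intro Max_ge) auto
  show "max_rev N K v r \<le> 1" unfolding max_rev_def using fin ne rb by (subst Max_le_iff) auto
  have "mnl_rev {1} v r \<le> max_rev N K v r"
    unfolding max_rev_def using fin assort_ne[OF K] by (intro Max_ge) auto
  then show "0 \<le> max_rev N K v r" using rb[OF assort_ne[OF K]] by linarith
qed

lemma round_core:
  fixes F :: "'f set" and p :: "'f \<Rightarrow> real" and V :: "'f \<Rightarrow> nat \<Rightarrow> real"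
    and vs r :: "nat \<Rightarrow> real" and Sel :: "'f \<Rightarrow> nat set" and \<eta> :: real
  assumes K: "1 \<le> K" "K \<le> N" and fin: "finite F" and p0: "\<And>f. f \<in> F \<Longrightarrow> 0 \<le> p f"
    and p1: "(\<Sum>f\<in>F. p f) = 1"
    and V: "\<And>f j. f \<in> F \<Longrightarrow> j \<in> {1..N} \<Longrightarrow> 0 \<le> V f j \<and> V f j \<le> 1"
    and vs: "\<And>j. j \<in> {1..N} \<Longrightarrow> 0 \<le> vs j \<and> vs j \<le> 1"
    and r: "\<And>j. j \<in> {1..N} \<Longrightarrow> 0 \<le> r j \<and> r j \<le> 1"
    and Sel: "\<And>g. g \<in> F \<Longrightarrow> Sel g \<in> assortments N K \<and> mnl_rev (Sel g) (V g) r = max_rev N K (V g) r"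
    and eta: "0 < \<eta>" "\<eta> \<le> 1"
  defines "ls \<equiv> \<lambda>u S i. 1 / (8 * \<eta> * real K) * (\<Sum>j\<in>S. (mnl_prob S u j - (if j = i then 1 else 0))\<^sup>2)
                       - max_rev N K u r"
  shows "(\<Sum>g\<in>F. p g * (\<Sum>i\<in>insert 0 (Sel g). mnl_prob (Sel g) vs i *
           (max_rev N K vs r - mnl_rev (Sel g) vs r
            + ln (\<Sum>f\<in>F. p f * exp (-\<eta> * (ls (V f) (Sel g) i - ls vs (Sel g) i))) / \<eta>)))
        \<le> (12 * real N * real K * (real K + 1)^4 + 4) * \<eta>"
proof -
  define Ms where "Ms = max_rev N K vs r"
  define M where "M f = max_rev N K (V f) r" for f
  define X where "X f = M f - Ms" for f
  define sq where "sq u S i = (\<Sum>j\<in>S. (mnl_prob S u j - (if j = i then 1 else (0::real)))\<^sup>2)" for u S i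
  define a where "a f S = (\<Sum>j\<in>S. (mnl_prob S (V f) j - mnl_prob S vs j)\<^sup>2)" for f S
  define A where "A g = (\<Sum>f\<in>F. p f * a f (Sel g))" for g
  define Kr where "Kr = real K"
  have Kr1: "1 \<le> Kr" using K unfolding Kr_def by simp
  have vsr: "\<And>j. j \<in> {1..N} \<Longrightarrow> 0 \<le> vs j \<and> 0 \<le> r j \<and> r j \<le> 1" using vs r by auto
  have Vr: "\<And>f j. f \<in> F \<Longrightarrow> j \<in> {1..N} \<Longrightarrow> 0 \<le> V f j \<and> 0 \<le> r j \<and> r j \<le> 1" using V r by auto
  have Ms01: "0 \<le> Ms" "Ms \<le> 1" unfolding Ms_def using maxrev_props[OF K vsr] by auto
  have M01: "0 \<le> M f" "M f \<le> 1" if "f \<in> F" for f unfolding M_def using maxrev_props[OF K Vr[OF that]] by auto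
  have X1: "\<bar>X f\<bar> \<le> 1" if "f \<in> F" for f unfolding X_def using M01[OF that] Ms01 by (simp add: abs_le_iff)
  have lnb: "ln (\<Sum>f\<in>F. p f * exp (-\<eta> * (ls (V f) S i - ls vs S i)))
      \<le> \<eta> * (\<Sum>f\<in>F. p f * X f) + 3 * \<eta>\<^sup>2
         + ((\<Sum>f\<in>F. p f * exp (-(sq (V f) S i - sq vs S i) / (4 * Kr))) - 1) / 2" for S i
  proof -
    have e: "-\<eta> * (ls (V f) S i - ls vs S i) = \<eta> * X f + (-(sq (V f) S i - sq vs S i) / (8 * Kr))" for f
      unfolding ls_def X_def M_def Ms_def sq_def Kr_def using eta K by (simp add: field_simps)
    have e2: "2 * (-(sq (V f) S i - sq vs S i) / (8 * Kr)) = -(sq (V f) S i - sq vs S i) / (4 * Kr)" for f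
      using Kr1 by (simp add: field_simps)
    show ?thesis unfolding e e2[symmetric] by (rule fg_bound[OF fin p0 p1 X1 eta])
  qed
  define sX where "sX = (\<Sum>f\<in>F. p f * X f)"
  define Rs where "Rs g = mnl_rev (Sel g) vs r" for g
  have perg: "(\<Sum>i\<in>insert 0 (Sel g). mnl_prob (Sel g) vs i *
           (Ms - Rs g + ln (\<Sum>f\<in>F. p f * exp (-\<eta> * (ls (V f) (Sel g) i - ls vs (Sel g) i))) / \<eta>))
        \<le> Ms - Rs g + sX + 3 * \<eta> - A g / (32 * \<eta> * Kr)" if g: "g \<in> F" for g
  proof -
    define S where "S = Sel g"
    have Sa: "S \<in> assortments N K" using Sel[OF g] S_def by simp
    note SP = assort_props[OF Sa]
    interpret ms: mnlS S vs using SP vs by unfold_locales auto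
    define q where "q i = mnl_prob S vs i" for i
    define Y where "Y i = (\<Sum>f\<in>F. p f * exp (-(sq (V f) S i - sq vs S i) / (4 * Kr)))" for i
    define L where "L i = ln (\<Sum>f\<in>F. p f * exp (-\<eta> * (ls (V f) S i - ls vs S i)))" for i
    have q0: "0 \<le> q i" for i unfolding q_def by (rule ms.mp_nn)
    have q1: "(\<Sum>i\<in>insert 0 S. q i) = 1" unfolding q_def by (rule ms.sum_all)
    have finI: "finite (insert 0 S)" using SP by simp
    have G1: "(\<Sum>i\<in>insert 0 S. q i * (Ms - Rs g + L i / \<eta>))
        \<le> (\<Sum>i\<in>insert 0 S. q i * (Ms - Rs g + sX + 3 * \<eta> + (Y i - 1) / (2 * \<eta>)))"
    proof (intro sum_mono mult_left_mono q0)
      fix i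
      have "L i \<le> \<eta> * sX + 3 * \<eta>\<^sup>2 + (Y i - 1) / 2" unfolding L_def Y_def sX_def by (rule lnb)
      then have "L i / \<eta> \<le> (\<eta> * sX + 3 * \<eta>\<^sup>2 + (Y i - 1) / 2) / \<eta>" using eta by (simp add: divide_right_mono)
      also have "\<dots> = sX + 3 * \<eta> + (Y i - 1) / (2 * \<eta>)" using eta by (simp add: field_simps power2_eq_square)
      finally show "Ms - Rs g + L i / \<eta> \<le> Ms - Rs g + sX + 3 * \<eta> + (Y i - 1) / (2 * \<eta>)" by simp
    qed
    also have "\<dots> = Ms - Rs g + sX + 3 * \<eta> + ((\<Sum>i\<in>insert 0 S. q i * Y i) - 1) / (2 * \<eta>)"
    proof -
      have "(\<Sum>i\<in>insert 0 S. q i * (Ms - Rs g + sX + 3 * \<eta> + (Y i - 1) / (2 * \<eta>)))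
          = (\<Sum>i\<in>insert 0 S. q i * (Ms - Rs g + sX + 3 * \<eta> - 1 / (2 * \<eta>)) + (q i * Y i) / (2 * \<eta>))"
        using eta by (intro sum.cong) (auto simp: field_simps)
      also have "\<dots> = (Ms - Rs g + sX + 3 * \<eta> - 1 / (2 * \<eta>)) + (\<Sum>i\<in>insert 0 S. q i * Y i) / (2 * \<eta>)"
        by (simp add: sum.distrib sum_distrib_right[symmetric] sum_divide_distrib[symmetric] q1)
      also have "\<dots> = Ms - Rs g + sX + 3 * \<eta> + ((\<Sum>i\<in>insert 0 S. q i * Y i) - 1) / (2 * \<eta>)"
        by (simp add: diff_divide_distrib)
      finally show ?thesis .
    qed
    also have "(\<Sum>i\<in>insert 0 S. q i * Y i) \<le> 1 - A g / (16 * Kr)"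
    proof -
      have "(\<Sum>i\<in>insert 0 S. q i * Y i)
          = (\<Sum>f\<in>F. p f * (\<Sum>i\<in>insert 0 S. q i * exp (-(sq (V f) S i - sq vs S i) / (4 * Kr))))"
        unfolding Y_def sum_distrib_left by (subst sum.swap) (simp add: algebra_simps)
      also have "\<dots> \<le> (\<Sum>f\<in>F. p f * (1 - a f S / (16 * Kr)))"
      proof (intro sum_mono mult_left_mono p0)
        fix f assume f: "f \<in> F"
        interpret mf: mnlS S "V f" using SP V[OF f] by unfold_locales auto
        have ab: "0 \<le> mnl_prob S (V f) j \<and> mnl_prob S (V f) j \<le> 1/2 \<and> 0 \<le> mnl_prob S vs j \<and> mnl_prob S vs j \<le> 1/2"
          if "j \<in> S" for j
        proof -
          have b1: "\<And>j. j \<in> S \<Longrightarrow> V f j \<le> 1" using V[OF f] SP(2) by auto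
          have b2: "\<And>j. j \<in> S \<Longrightarrow> vs j \<le> 1" using vs SP(2) by auto
          show ?thesis using mf.mp_nn ms.mp_nn mf.mp_half[OF b1 that] ms.mp_half[OF b2 that] by auto
        qed
        note cg = conc_gen[OF SP(1) SP(3) ab mf.sumS_le1 ms.sumS_le1 Kr1]
        have qz: "mnl_prob S vs 0 = 1 - (\<Sum>j\<in>S. mnl_prob S vs j)" using q1 SP(1,3) unfolding q_def by simp
        show "(\<Sum>i\<in>insert 0 S. q i * exp (-(sq (V f) S i - sq vs S i) / (4 * Kr))) \<le> 1 - a f S / (16 * Kr)"
          using cg SP(1,3) unfolding a_def sq_def q_def by (simp add: qz)
      qed
      also have "\<dots> = 1 - A g / (16 * Kr)"
        unfolding A_def S_def using p1 by (simp add: algebra_simps sum_subtractf sum_divide_distrib[symmetric] sum_distrib_left)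
      finally show ?thesis .
    qed
    finally have "(\<Sum>i\<in>insert 0 S. q i * (Ms - Rs g + L i / \<eta>))
         \<le> Ms - Rs g + sX + 3 * \<eta> + ((1 - A g / (16 * Kr)) - 1) / (2 * \<eta>)"
      using eta by (simp add: divide_right_mono)
    also have "((1 - A g / (16 * Kr)) - 1) / (2 * \<eta>) = - (A g / (32 * \<eta> * Kr))" using eta Kr1 by (simp add: field_simps)
    finally show ?thesis unfolding q_def L_def S_def by simp
  qed
  define c where "c = 32 * \<eta> * Kr"
  have c0: "0 < c" unfolding c_def using eta Kr1 by simp
  have step1: "(\<Sum>g\<in>F. p g * (\<Sum>i\<in>insert 0 (Sel g). mnl_prob (Sel g) vs i *
           (max_rev N K vs r - mnl_rev (Sel g) vs r
            + ln (\<Sum>f\<in>F. p f * exp (-\<eta> * (ls (V f) (Sel g) i - ls vs (Sel g) i))) / \<eta>)))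
     \<le> (\<Sum>g\<in>F. p g * (Ms - Rs g + sX + 3 * \<eta> - A g / c))"
    unfolding Ms_def[symmetric] Rs_def[symmetric] c_def using perg p0 by (intro sum_mono mult_left_mono) auto
  have sX_eq: "sX = (\<Sum>g\<in>F. p g * M g) - Ms"
    unfolding sX_def X_def by (simp add: right_diff_distrib sum_subtractf sum_distrib_right[symmetric] p1)
  have step2: "(\<Sum>g\<in>F. p g * (Ms - Rs g + sX + 3 * \<eta> - A g / c))
      = (\<Sum>g\<in>F. p g * (M g - Rs g)) + 3 * \<eta> - (\<Sum>g\<in>F. p g * A g) / c"
  proof -
    have "(\<Sum>g\<in>F. p g * (Ms - Rs g + sX + 3 * \<eta> - A g / c))
        = (\<Sum>g\<in>F. p g * (M g - Rs g) + (Ms + sX + 3 * \<eta>) * p g - p g * M g - (p g * A g) / c)"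
      by (rule sum.cong) (auto simp: algebra_simps)
    also have "\<dots> = (\<Sum>g\<in>F. p g * (M g - Rs g)) + (Ms + sX + 3 * \<eta>) * (\<Sum>g\<in>F. p g)
          - (\<Sum>g\<in>F. p g * M g) - (\<Sum>g\<in>F. p g * A g) / c"
      by (simp add: sum.distrib sum_subtractf sum_distrib_left sum_divide_distrib)
    finally show ?thesis unfolding p1 sX_eq by simp
  qed
  have step3: "(\<Sum>g\<in>F. p g * (M g - Rs g)) \<le> (\<Sum>g\<in>F. p g * (\<Sum>i\<in>Sel g. \<bar>V g i - vs i\<bar>))"
  proof (intro sum_mono mult_left_mono p0)
    fix g assume g: "g \<in> F"
    note SP = assort_props[OF conjunct1[OF Sel[OF g]]]
    have "M g = mnl_rev (Sel g) (V g) r" unfolding M_def using Sel[OF g] by simp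
    moreover have "mnl_rev (Sel g) (V g) r - mnl_rev (Sel g) vs r \<le> (\<Sum>i\<in>Sel g. \<bar>V g i - vs i\<bar>)"
      by (rule rev_lip[OF SP(1)]) (use SP(2) V[OF g] vs r in auto)
    ultimately show "M g - Rs g \<le> (\<Sum>i\<in>Sel g. \<bar>V g i - vs i\<bar>)" unfolding Rs_def by simp
  qed
  define \<gamma> where "\<gamma> = 16 * Kr * (Kr + 1)^4 * \<eta>"
  have g0: "0 < \<gamma>" unfolding \<gamma>_def using Kr1 eta by simp
  have step4: "(\<Sum>g\<in>F. p g * (\<Sum>i\<in>Sel g. \<bar>V g i - vs i\<bar>))
     \<le> real N * \<gamma> / 2 + (1 / (2*\<gamma>)) * (\<Sum>g\<in>F. p g * (\<Sum>f\<in>F. p f * (\<Sum>i\<in>Sel g. (V f i - vs i)\<^sup>2)))"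
    by (rule decouple[OF fin p0 g0, where d="\<lambda>f i. V f i - vs i"]) (use assort_props(2)[OF conjunct1[OF Sel]] in auto)
  have step5: "(\<Sum>i\<in>Sel g. (V f i - vs i)\<^sup>2) \<le> (Kr + 1)^4 * a f (Sel g)" if g: "g \<in> F" and f: "f \<in> F" for f g
  proof -
    define S where "S = Sel g"
    note SP = assort_props[OF conjunct1[OF Sel[OF g]], folded S_def]
    interpret ms: mnlS S vs using SP vs by unfold_locales auto
    interpret mf: mnlS S "V f" using SP V[OF f] by unfold_locales auto
    have "(\<Sum>i\<in>S. (V f i - vs i)\<^sup>2) \<le> (real (card S) + 1)^4 *
           (\<Sum>i\<in>S. (V f i / (1 + (\<Sum>j\<in>S. V f j)) - vs i / (1 + (\<Sum>j\<in>S. vs j)))\<^sup>2)"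
      by (rule mu_lip[OF SP(1)]) (use SP(2) V[OF f] vs in auto)
    also have "(\<Sum>i\<in>S. (V f i / (1 + (\<Sum>j\<in>S. V f j)) - vs i / (1 + (\<Sum>j\<in>S. vs j)))\<^sup>2) = a f S"
      unfolding a_def using mf.mp_S ms.mp_S unfolding mf.Z_def ms.Z_def by (intro sum.cong) auto
    also have "(real (card S) + 1)^4 * a f S \<le> (Kr + 1)^4 * a f S"
    proof (rule mult_right_mono)
      show "0 \<le> a f S" unfolding a_def by (simp add: sum_nonneg)
      show "(real (card S) + 1)^4 \<le> (Kr + 1)^4" using SP(4) unfolding Kr_def by (intro power_mono) auto
    qed
    finally show ?thesis unfolding S_def .
  qed
  have step5': "(\<Sum>g\<in>F. p g * (\<Sum>f\<in>F. p f * (\<Sum>i\<in>Sel g. (V f i - vs i)\<^sup>2)))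
      \<le> (Kr + 1)^4 * (\<Sum>g\<in>F. p g * A g)"
  proof -
    have "(\<Sum>g\<in>F. p g * (\<Sum>f\<in>F. p f * (\<Sum>i\<in>Sel g. (V f i - vs i)\<^sup>2)))
        \<le> (\<Sum>g\<in>F. p g * (\<Sum>f\<in>F. p f * ((Kr + 1)^4 * a f (Sel g))))"
      using step5 p0 by (intro sum_mono mult_left_mono) auto
    also have "\<dots> = (Kr + 1)^4 * (\<Sum>g\<in>F. p g * A g)"
      unfolding A_def by (simp add: sum_distrib_left algebra_simps)
    finally show ?thesis .
  qed
  have PA0: "0 \<le> (\<Sum>g\<in>F. p g * A g)"
    unfolding A_def a_def using p0 by (intro sum_nonneg mult_nonneg_nonneg) auto
  have "(1 / (2*\<gamma>)) * (\<Sum>g\<in>F. p g * (\<Sum>f\<in>F. p f * (\<Sum>i\<in>Sel g. (V f i - vs i)\<^sup>2)))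
       \<le> (1 / (2*\<gamma>)) * ((Kr + 1)^4 * (\<Sum>g\<in>F. p g * A g))"
    using step5' g0 by (intro mult_left_mono) auto
  also have "\<dots> = (\<Sum>g\<in>F. p g * A g) / c"
    unfolding \<gamma>_def c_def using Kr1 eta by (simp add: field_simps)
  finally have step6: "(1 / (2*\<gamma>)) * (\<Sum>g\<in>F. p g * (\<Sum>f\<in>F. p f * (\<Sum>i\<in>Sel g. (V f i - vs i)\<^sup>2)))
       \<le> (\<Sum>g\<in>F. p g * A g) / c" .
  have step7: "real N * \<gamma> / 2 + 3 * \<eta> \<le> (12 * real N * real K * (real K + 1)^4 + 4) * \<eta>"
  proof -
    define Q where "Q = real N * real K * (real K + 1)^4"
    have Q0: "0 \<le> Q" unfolding Q_def by simp
    have e1: "real N * \<gamma> / 2 = 8 * Q * \<eta>" unfolding \<gamma>_def Kr_def Q_def by simp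
    have e2: "(12 * real N * real K * (real K + 1)^4 + 4) * \<eta> = 12 * Q * \<eta> + 4 * \<eta>"
      unfolding Q_def by (simp add: algebra_simps)
    have "8 * Q * \<eta> \<le> 12 * Q * \<eta>" using eta Q0 by (intro mult_right_mono) auto
    then show ?thesis unfolding e1 e2 using eta by linarith
  qed
  show ?thesis using step1 step2 step3 step4 step6 step7 by linarith
qed


locale fgts =
  fixes F :: "('x \<Rightarrow> nat \<Rightarrow> real) set"
    and fstar :: "'x \<Rightarrow> nat \<Rightarrow> real"
    and N K :: nat and \<eta> :: real
    and adv :: "'x round list \<Rightarrow> 'x \<times> (nat \<Rightarrow> real)"
    and sel :: "(nat \<Rightarrow> real) \<Rightarrow> (nat \<Rightarrow> real) \<Rightarrow> nat set"
  assumes K1: "1 \<le> K" and KN: "K \<le> N"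
    and finF: "finite F" and fsF: "fstar \<in> F"
    and Fb: "\<And>f x i. f \<in> F \<Longrightarrow> i \<in> {1..N} \<Longrightarrow> 0 \<le> f x i \<and> f x i \<le> 1"
    and advb: "\<And>h i. i \<in> {1..N} \<Longrightarrow> 0 \<le> snd (adv h) i \<and> snd (adv h) i \<le> 1"
    and selb: "\<And>v r. sel v r \<in> assortments N K \<and> mnl_rev (sel v r) v r = max_rev N K v r"
    and eta0: "0 < \<eta>" and eta1: "\<eta> \<le> 1"
begin

abbreviation "cum f h \<equiv> cum_loss N K \<eta> f h"
abbreviation "ll f rd \<equiv> loss_est N K \<eta> f rd"
definition "w h f = exp (- \<eta> * cum f h)"
definition "W h = (\<Sum>g\<in>F. w h g)"
definition "p h f = w h f / W h"

lemma Fne: "F \<noteq> {}" using fsF by auto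

lemma w_pos: "0 < w h f" unfolding w_def by simp

lemma W_pos: "0 < W h"
  unfolding W_def using finF Fne w_pos by (intro sum_pos) auto

lemma p_nn: "0 \<le> p h f" unfolding p_def using w_pos[of h f] W_pos[of h] by simp

lemma p_sum: "(\<Sum>f\<in>F. p h f) = 1"
  unfolding p_def using W_pos[of h] by (simp add: sum_divide_distrib[symmetric] W_def[symmetric])

lemma post_pmf: "pmf (posterior F N K \<eta> h) f = (if f \<in> F then p h f else 0)"
  and post_set: "set_pmf (posterior F N K \<eta> h) \<subseteq> F"
proof -
  have eq: "(\<lambda>f. if f \<in> F then exp (- \<eta> * cum_loss N K \<eta> f h) / (\<Sum>g\<in>F. exp (- \<eta> * cum_loss N K \<eta> g h)) else 0)
      = (\<lambda>f. if f \<in> F then p h f else 0)" unfolding p_def w_def W_def by simp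
  have s: "(\<Sum>f\<in>F. if f \<in> F then p h f else 0) = 1" using p_sum by simp
  note pe = pmf_embed_finite[of F "\<lambda>f. if f \<in> F then p h f else 0", OF finF _ _ s]
  show "pmf (posterior F N K \<eta> h) f = (if f \<in> F then p h f else 0)"
    unfolding posterior_def eq using pe(1) p_nn by auto
  show "set_pmf (posterior F N K \<eta> h) \<subseteq> F"
    unfolding posterior_def eq using pe(2) p_nn by auto
qed

lemma exp_post: "measure_pmf.expectation (posterior F N K \<eta> h) g = (\<Sum>f\<in>F. p h f * g f)"
  using exp_finite[OF finF post_set] by (intro trans[OF exp_finite[OF finF post_set]] sum.cong) (auto simp: post_pmf)

definition "Wt h = measure_pmf.expectation (pmf_of_set F) (\<lambda>f. exp (- \<eta> * (\<Sum>rd\<leftarrow>h. ll f rd - ll fstar rd)))"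
definition "G h rd = (\<Sum>f\<in>F. p h f * exp (- \<eta> * (ll f rd - ll fstar rd)))"

lemma suml_diff: "(\<Sum>rd\<leftarrow>h. ll f rd - ll fstar rd) = cum f h - cum fstar h"
  unfolding cum_loss_def by (simp add: sum_list_subtractf)

lemma cum_app: "cum f (h @ [rd]) = cum f h + ll f rd"
  unfolding cum_loss_def by simp

lemma exp_split: "exp (- \<eta> * (cum f h - cum fstar h)) = w h f * exp (\<eta> * cum fstar h)"
  unfolding w_def by (simp add: exp_add[symmetric] algebra_simps)

lemma Wt_eq: "Wt h = (\<Sum>f\<in>F. w h f) * exp (\<eta> * cum fstar h) / card F"
  unfolding Wt_def integral_pmf_of_set[OF Fne finF] suml_diff exp_split
  by (simp add: sum_distrib_right)

lemma Wt_pos: "0 < Wt h"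
  unfolding Wt_eq W_def[symmetric] using W_pos finF Fne by (simp add: card_gt_0_iff)

lemma G_pos: "0 < G h rd"
  unfolding G_def using finF p_nn p_sum by (intro sum_pos_prob) auto

lemma Wt_step: "Wt (h @ [rd]) = Wt h * G h rd"
proof -
  have "Wt (h @ [rd]) = (\<Sum>f\<in>F. exp (- \<eta> * (cum f (h @ [rd]) - cum fstar (h @ [rd])))) / card F"
    unfolding Wt_def integral_pmf_of_set[OF Fne finF] suml_diff ..
  also have "(\<Sum>f\<in>F. exp (- \<eta> * (cum f (h @ [rd]) - cum fstar (h @ [rd]))))
     = (\<Sum>f\<in>F. w h f * exp (- \<eta> * (ll f rd - ll fstar rd))) * exp (\<eta> * cum fstar h)"
    unfolding cum_app sum_distrib_right
    by (intro sum.cong refl) (simp add: w_def exp_add[symmetric] algebra_simps)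
  also have "(\<Sum>f\<in>F. w h f * exp (- \<eta> * (ll f rd - ll fstar rd))) = W h * G h rd"
    unfolding G_def p_def sum_distrib_left using W_pos[of h] by (intro sum.cong refl) simp
  finally show ?thesis unfolding Wt_eq W_def[symmetric] by (simp add: mult_ac)
qed

definition "Psi h = (\<Sum>rd\<leftarrow>h. round_regret N K fstar rd) + ln (Wt h) / \<eta>"

lemma Psi_step: "Psi (h @ [rd]) = Psi h + (round_regret N K fstar rd + ln (G h rd) / \<eta>)"
  unfolding Psi_def Wt_step using Wt_pos[of h] G_pos[of h rd] by (simp add: ln_mult add_divide_distrib)

lemma mnlS_inst: "S \<in> assortments N K \<Longrightarrow> mnlS S (fstar x)"
  unfolding mnlS_def using assort_props[of S N K] Fb[OF fsF] by auto

abbreviation "xx h \<equiv> fst (adv h)"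
abbreviation "rr h \<equiv> snd (adv h)"
abbreviation "SS h g \<equiv> sel (g (xx h)) (rr h)"

definition "Bset h = (\<Union>g\<in>F. (\<lambda>i. h @ [(g, xx h, rr h, SS h g, i)]) ` insert 0 (SS h g))"

lemma Bset_fin: "finite (Bset h)"
  unfolding Bset_def using finF assort_props(1)[OF conjunct1[OF selb]] by auto

lemma step_exp:
  fixes \<Phi> :: "'x round list \<Rightarrow> real"
  shows "measure_pmf.expectation (fgts_step F N K \<eta> fstar adv sel h) \<Phi>
   = (\<Sum>g\<in>F. p h g * (\<Sum>i\<in>insert 0 (SS h g). mnl_prob (SS h g) (fstar (xx h)) i * \<Phi> (h @ [(g, xx h, rr h, SS h g, i)])))"
proof -
  have sub: "set_pmf ((\<lambda>f. let x = xx h; r = rr h; S = sel (f x) r in map_pmf (\<lambda>i. h @ [(f, x, r, S, i)]) (mnl_pmf S (fstar x))) g) \<subseteq> Bset h"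
    if g: "g \<in> F" for g
  proof -
    interpret m: mnlS "SS h g" "fstar (xx h)" by (rule mnlS_inst[OF conjunct1[OF selb]])
    show ?thesis unfolding Let_def Bset_def using m.set_mnl g by auto
  qed
  have "measure_pmf.expectation (fgts_step F N K \<eta> fstar adv sel h) \<Phi>
     = (\<Sum>g\<in>F. pmf (posterior F N K \<eta> h) g * measure_pmf.expectation
          ((\<lambda>f. let x = xx h; r = rr h; S = sel (f x) r in map_pmf (\<lambda>i. h @ [(f, x, r, S, i)]) (mnl_pmf S (fstar x))) g) \<Phi>)"
    unfolding fgts_step_def by (rule exp_bind_finite[OF finF post_set Bset_fin sub])
  also have "\<dots> = (\<Sum>g\<in>F. p h g * (\<Sum>i\<in>insert 0 (SS h g). mnl_prob (SS h g) (fstar (xx h)) i * \<Phi> (h @ [(g, xx h, rr h, SS h g, i)])))"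
  proof (intro sum.cong refl)
    fix g assume g: "g \<in> F"
    interpret m: mnlS "SS h g" "fstar (xx h)" by (rule mnlS_inst[OF conjunct1[OF selb]])
    show "pmf (posterior F N K \<eta> h) g * measure_pmf.expectation
          ((\<lambda>f. let x = xx h; r = rr h; S = sel (f x) r in map_pmf (\<lambda>i. h @ [(f, x, r, S, i)]) (mnl_pmf S (fstar x))) g) \<Phi>
        = p h g * (\<Sum>i\<in>insert 0 (SS h g). mnl_prob (SS h g) (fstar (xx h)) i * \<Phi> (h @ [(g, xx h, rr h, SS h g, i)]))"
      using g by (simp add: post_pmf Let_def m.exp_mnl)
  qed
  finally show ?thesis .
qed

lemma step_set: "set_pmf (fgts_step F N K \<eta> fstar adv sel h) \<subseteq> Bset h"
proof -
  have "set_pmf (fgts_step F N K \<eta> fstar adv sel h) \<subseteq> (\<Union>g\<in>F. set_pmf (let x = xx h; r = rr h; S = sel (g x) r in map_pmf (\<lambda>i. h @ [(g, x, r, S, i)]) (mnl_pmf S (fstar x))))"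
    unfolding fgts_step_def using post_set by auto
  also have "\<dots> \<subseteq> Bset h"
  proof (intro UN_least)
    fix g assume g: "g \<in> F"
    interpret m: mnlS "SS h g" "fstar (xx h)" by (rule mnlS_inst[OF conjunct1[OF selb]])
    show "set_pmf (let x = xx h; r = rr h; S = sel (g x) r in map_pmf (\<lambda>i. h @ [(g, x, r, S, i)]) (mnl_pmf S (fstar x))) \<subseteq> Bset h"
      unfolding Let_def Bset_def using m.set_mnl g by auto
  qed
  finally show ?thesis .
qed

definition "cst = 12 * real N * real K * (real K + 1)^4 + 4"

lemma step_bound: "measure_pmf.expectation (fgts_step F N K \<eta> fstar adv sel h) Psi \<le> Psi h + cst * \<eta>"
proof -
  define q where "q g i = mnl_prob (SS h g) (fstar (xx h)) i" for g i
  define B where "B g i = round_regret N K fstar (g, xx h, rr h, SS h g, i) + ln (G h (g, xx h, rr h, SS h g, i)) / \<eta>" for g i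
  have q1: "(\<Sum>i\<in>insert 0 (SS h g). q g i) = 1" for g
  proof -
    interpret m: mnlS "SS h g" "fstar (xx h)" by (rule mnlS_inst[OF conjunct1[OF selb]])
    show ?thesis unfolding q_def by (rule m.sum_all)
  qed
  have "measure_pmf.expectation (fgts_step F N K \<eta> fstar adv sel h) Psi
      = (\<Sum>g\<in>F. p h g * (\<Sum>i\<in>insert 0 (SS h g). q g i * (Psi h + B g i)))"
    unfolding step_exp Psi_step q_def B_def ..
  also have "\<dots> = (\<Sum>g\<in>F. p h g * (Psi h + (\<Sum>i\<in>insert 0 (SS h g). q g i * B g i)))"
    by (intro sum.cong refl) (simp add: distrib_left sum.distrib sum_distrib_right[symmetric] q1)
  also have "\<dots> = Psi h + (\<Sum>g\<in>F. p h g * (\<Sum>i\<in>insert 0 (SS h g). q g i * B g i))"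
    by (simp add: distrib_left sum.distrib sum_distrib_right[symmetric] p_sum)
  also have "(\<Sum>g\<in>F. p h g * (\<Sum>i\<in>insert 0 (SS h g). q g i * B g i)) \<le> cst * \<eta>"
  proof -
    note rc = round_core[OF K1 KN finF p_nn p_sum, of "\<lambda>f. f (xx h)" "fstar (xx h)" "rr h" "\<lambda>g. SS h g" \<eta>]
    have rc': "(\<Sum>g\<in>F. p h g * (\<Sum>i\<in>insert 0 (SS h g). q g i * B g i))
      = (\<Sum>g\<in>F. p h g * (\<Sum>i\<in>insert 0 (SS h g). mnl_prob (SS h g) (fstar (xx h)) i *
           (max_rev N K (fstar (xx h)) (rr h) - mnl_rev (SS h g) (fstar (xx h)) (rr h)
            + ln (\<Sum>f\<in>F. p h f * exp (-\<eta> * (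
                (1 / (8 * \<eta> * real K) * (\<Sum>j\<in>SS h g. (mnl_prob (SS h g) (f (xx h)) j - (if j = i then 1 else 0))\<^sup>2) - max_rev N K (f (xx h)) (rr h))
              - (1 / (8 * \<eta> * real K) * (\<Sum>j\<in>SS h g. (mnl_prob (SS h g) (fstar (xx h)) j - (if j = i then 1 else 0))\<^sup>2) - max_rev N K (fstar (xx h)) (rr h))))) / \<eta>)))"
      unfolding q_def B_def G_def round_regret_def loss_est_def by simp
    show ?thesis unfolding rc' cst_def
      by (rule rc) (use Fb fsF advb selb eta0 eta1 in auto)
  qed
  finally show ?thesis by simp
qed

abbreviation "traj T \<equiv> fgts_traj F N K \<eta> fstar adv sel T"

lemma traj_fin: "finite (set_pmf (traj T))"
proof (induction T)
  case 0 then show ?case by simp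
next
  case (Suc T)
  have "set_pmf (traj (Suc T)) \<subseteq> (\<Union>h\<in>set_pmf (traj T). Bset h)" using step_set by auto
  moreover have "finite (\<Union>h\<in>set_pmf (traj T). Bset h)" using Suc Bset_fin by auto
  ultimately show ?case by (rule finite_subset)
qed

lemma Wt_nil: "Wt [] = 1"
  unfolding Wt_def integral_pmf_of_set[OF Fne finF] using finF Fne by simp

lemma traj_bound: "measure_pmf.expectation (traj T) Psi \<le> cst * \<eta> * real T"
proof (induction T)
  case 0 then show ?case by (simp add: Psi_def Wt_nil)
next
  case (Suc T)
  define A where "A = set_pmf (traj T)"
  have finA: "finite A" unfolding A_def by (rule traj_fin)
  have finB: "finite (\<Union>h\<in>A. Bset h)" using finA Bset_fin by auto
  have subB: "\<And>h. h \<in> A \<Longrightarrow> set_pmf (fgts_step F N K \<eta> fstar adv sel h) \<subseteq> (\<Union>h\<in>A. Bset h)"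
    using step_set by blast
  have "measure_pmf.expectation (traj (Suc T)) Psi
      = (\<Sum>h\<in>A. pmf (traj T) h * measure_pmf.expectation (fgts_step F N K \<eta> fstar adv sel h) Psi)"
    by (simp only: fgts_traj.simps) (rule exp_bind_finite[OF finA _ finB subB], simp add: A_def)
  also have "\<dots> \<le> (\<Sum>h\<in>A. pmf (traj T) h * (Psi h + cst * \<eta>))"
    using step_bound by (intro sum_mono mult_left_mono) auto
  also have "\<dots> = (\<Sum>h\<in>A. pmf (traj T) h * Psi h) + cst * \<eta> * (\<Sum>h\<in>A. pmf (traj T) h)"
    by (simp add: distrib_left sum.distrib sum_distrib_left sum_distrib_right mult_ac)
  also have "(\<Sum>h\<in>A. pmf (traj T) h) = 1" by (rule sum_pmf_eq_1[OF finA]) (simp add: A_def)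
  also have "(\<Sum>h\<in>A. pmf (traj T) h * Psi h) = measure_pmf.expectation (traj T) Psi"
    by (rule exp_finite[symmetric, OF finA]) (simp add: A_def)
  finally show ?case using Suc.IH by (simp add: algebra_simps)
qed

lemma main_bound: "regret_MNL F N K \<eta> fstar adv sel T
   \<le> 12 * \<eta> * real N * real K * (real K + 1) ^ 4 * real T + 4 * \<eta> * real T
     + Z_term F N K \<eta> fstar adv sel T / \<eta>"
proof -
  define A where "A = set_pmf (traj T)"
  have finA: "finite A" unfolding A_def by (rule traj_fin)
  have sA: "set_pmf (traj T) \<subseteq> A" unfolding A_def by simp
  define a where "a h = (\<Sum>rd\<leftarrow>h. round_regret N K fstar rd)" for h
  define b where "b h = ln (Wt h)" for h
  have R: "regret_MNL F N K \<eta> fstar adv sel T = (\<Sum>h\<in>A. pmf (traj T) h * a h)"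
    unfolding regret_MNL_def a_def by (rule exp_finite[OF finA sA])
  have Z: "Z_term F N K \<eta> fstar adv sel T = - (\<Sum>h\<in>A. pmf (traj T) h * b h)"
    unfolding Z_term_def b_def Wt_def by (subst exp_finite[OF finA sA]) simp
  have P: "measure_pmf.expectation (traj T) Psi = (\<Sum>h\<in>A. pmf (traj T) h * a h) + (\<Sum>h\<in>A. pmf (traj T) h * b h) / \<eta>"
    unfolding exp_finite[OF finA sA] Psi_def a_def[symmetric] b_def[symmetric]
    by (simp add: distrib_left sum.distrib sum_divide_distrib)
  have "regret_MNL F N K \<eta> fstar adv sel T = measure_pmf.expectation (traj T) Psi + Z_term F N K \<eta> fstar adv sel T / \<eta>"
    unfolding R Z P by simp
  also have "\<dots> \<le> cst * \<eta> * real T + Z_term F N K \<eta> fstar adv sel T / \<eta>"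
    using traj_bound by simp
  also have "cst * \<eta> * real T = 12 * \<eta> * real N * real K * (real K + 1) ^ 4 * real T + 4 * \<eta> * real T"
    unfolding cst_def by (simp add: algebra_simps)
  finally show ?thesis .
qed

end


theorem theorem6:
  fixes F :: "('x \<Rightarrow> nat \<Rightarrow> real) set"
    and fstar :: "'x \<Rightarrow> nat \<Rightarrow> real"
    and N K T :: nat and \<eta> :: real
    and adv :: "'x round list \<Rightarrow> 'x \<times> (nat \<Rightarrow> real)"
    and sel :: "(nat \<Rightarrow> real) \<Rightarrow> (nat \<Rightarrow> real) \<Rightarrow> nat set"
  assumes "1 \<le> K" and "K \<le> N"
    and "finite F" and "fstar \<in> F"
    and "\<And>f x i. f \<in> F \<Longrightarrow> i \<in> {1..N} \<Longrightarrow> 0 \<le> f x i \<and> f x i \<le> 1"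
    and "\<And>h i. i \<in> {1..N} \<Longrightarrow> 0 \<le> snd (adv h) i \<and> snd (adv h) i \<le> 1"
    and "\<And>v r. sel v r \<in> assortments N K \<and> mnl_rev (sel v r) v r = max_rev N K v r"
    and "0 < \<eta>" and "\<eta> \<le> 1"
  shows "regret_MNL F N K \<eta> fstar adv sel T
           \<le> 12 * \<eta> * real N * real K * (real K + 1) ^ 4 * real T + 4 * \<eta> * real T
             + Z_term F N K \<eta> fstar adv sel T / \<eta>"
  proof -
  interpret fgts F fstar N K \<eta> adv sel
    by unfold_locales (use assms in auto)
  show ?thesis by (rule main_bound)
qed

end
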